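(* Fix $t_+\in\mathbb{C}\setminus(-\infty,-1]$ and $t_-\in\mathbb{C}\setminus[1,\infty)$. For every integer $k\ge0$ and all $a,b\in I$ with $a\prec b$, \[F_a^b(-k)=\frac{1}{k+1}\sum_{j=0}^{k+1}\binom{k+1}{j}B_j\bigl((-1)^jb^{k+1-j}-a^{k+1-j}\bigr),\] where $a,b$ are regarded as complex numbers ($n+t_+$ resp.\ $-n+t_-$), the powers are ordinary integer powers, and $0^0=1$.
   Context: $B_n$ are the Seki–Bernoulli numbers, $ze^z/(e^z-1)=\sum_{n\ge0}B_nz^n/n!$. Let $I_+=\{n+t_+:n\in\mathbb{Z}_{\ge0}\}$, $I_-=\{-n+t_-:n\in\mathbb{Z}_{\ge0}\}$, $I=I_+\amalg I_-$ (formal disjoint union), totally ordered by $t_+\prec1+t_+\prec2+t_+\prec\cdots\prec-2+t_-\prec-1+t_-\prec t_-$. For $a=n+t_+\in I_+$, $a^{-s}=(n+t_+)^{-s}$ (principal branch); for $a=-n+t_-\in I_-$, $a^{-s}$ means $e^{\pi is}(n-t_-)^{-s}$. For $a\prec b$, $F_a^b(s)=\sum_{c\in I,\,a\prec c\prec b}c^{-s}$ ($\Re(s)>1$), extended to an entire function of $s$; $F_a^b(-k)$ is the value of this continuation. *)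

theory Defs
  imports "HOL-Analysis.Analysis" "HOL-Computational_Algebra.Formal_Power_Series"
begin

text \<open>Seki--Bernoulli numbers: z e^z/(e^z - 1) = sum B_n z^n / n!  (so B_1 = +1/2).\<close>
definition seki_bernoulli :: "nat \<Rightarrow> complex" where
  "seki_bernoulli n =
     fact n * fps_nth ((fps_X * fps_exp (1::complex)) div (fps_exp 1 - 1)) n"

text \<open>The index set I = I_+ disjoint-union I_-: Pos n stands for n + t_+, Neg n for -n + t_-.\<close>
datatype idx = Pos nat | Neg nat

fun idx_less :: "idx \<Rightarrow> idx \<Rightarrow> bool" where
  "idx_less (Pos n) (Pos m) = (n < m)"
| "idx_less (Pos n) (Neg m) = True"
| "idx_less (Neg n) (Pos m) = False"
| "idx_less (Neg n) (Neg m) = (m < n)"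

fun idx_val :: "complex \<Rightarrow> complex \<Rightarrow> idx \<Rightarrow> complex" where
  "idx_val tp tm (Pos n) = of_nat n + tp"
| "idx_val tp tm (Neg n) = - of_nat n + tm"

fun idx_pow :: "complex \<Rightarrow> complex \<Rightarrow> idx \<Rightarrow> complex \<Rightarrow> complex" where
  "idx_pow tp tm (Pos n) s = (of_nat n + tp) powr (- s)"
| "idx_pow tp tm (Neg n) s = exp (pi * \<i> * s) * (of_nat n - tm) powr (- s)"

definition idx_between :: "idx \<Rightarrow> idx \<Rightarrow> idx set" where
  "idx_between a b = {c. idx_less a c \<and> idx_less c b}"

end

theory Submission
  imports Defs "HOL-Complex_Analysis.Complex_Analysis"
begin

definition PB :: "complex fps" where
  "PB = (fps_X * fps_exp 1) div (fps_exp 1 - 1)"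

lemma subdeg_E1: "subdegree (fps_exp (1::complex) - 1) = 1"
  by (rule subdegreeI) auto

lemma E1_nz: "fps_exp (1::complex) - 1 \<noteq> 0"
proof
  assume "fps_exp (1::complex) - 1 = 0"
  then have "(fps_exp (1::complex) - 1) $ 1 = 0" by simp
  then show False by simp
qed

lemma PB_mult: "PB * (fps_exp 1 - 1) = fps_X * fps_exp 1"
  unfolding PB_def
  by (rule fps_times_divide_eq) (use E1_nz subdeg_E1 in \<open>auto simp: subdegree_mult\<close>)

lemma seki_PB: "seki_bernoulli n = fact n * PB $ n"
  by (simp add: seki_bernoulli_def PB_def)

lemma PB_rec: "(\<Sum>j\<le>r. PB $ j / fact (Suc r - j)) = 1 / fact r"
proof -
  have "(PB * (fps_exp 1 - 1)) $ Suc r = (fps_X * fps_exp 1) $ Suc r"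
    by (simp add: PB_mult)
  also have "\<dots> = 1 / fact r" by simp
  also have "(PB * (fps_exp 1 - 1)) $ Suc r = (\<Sum>i=0..Suc r. PB $ i * (fps_exp 1 - 1) $ (Suc r - i))"
    by (rule fps_mult_nth)
  also have "\<dots> = (\<Sum>i=0..r. PB $ i * (fps_exp 1 - 1) $ (Suc r - i))"
    by (simp add: sum.atLeast0_atMost_Suc)
  also have "\<dots> = (\<Sum>j\<le>r. PB $ j / fact (Suc r - j))"
    by (auto simp: atLeast0AtMost divide_inverse intro!: sum.cong)
  finally show ?thesis by simp
qed

definition Sp :: "nat \<Rightarrow> complex \<Rightarrow> complex" where
  "Sp n x = (\<Sum>j=0..n. of_nat (n choose j) * seki_bernoulli j * x^(n-j))"

lemma Sp_fps: "Sp n x = fact n * (PB * fps_exp x) $ n"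
proof -
  have "fact n * (PB * fps_exp x) $ n = (\<Sum>j=0..n. fact n * (PB $ j * (x^(n-j) / fact (n-j))))"
    by (simp add: fps_mult_nth sum_distrib_left)
  also have "\<dots> = Sp n x"
    unfolding Sp_def
  proof (intro sum.cong refl)
    fix j assume "j \<in> {0..n}"
    then have j: "j \<le> n" by simp
    show "fact n * (PB $ j * (x^(n-j) / fact (n-j))) = of_nat (n choose j) * seki_bernoulli j * x^(n-j)"
      using j by (simp add: binomial_fact seki_PB field_simps)
  qed
  finally show ?thesis by simp
qed

lemma Sp_diff: "Sp (Suc k) (x+1) - Sp (Suc k) x = of_nat (Suc k) * (x+1)^k"
proof -
  have "PB * fps_exp (x+1) - PB * fps_exp x = PB * (fps_exp 1 - 1) * fps_exp x"
    by (simp add: fps_exp_add_mult algebra_simps)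
  also have "\<dots> = fps_X * fps_exp (x+1)"
    by (simp only: PB_mult) (simp add: fps_exp_add_mult mult_ac)
  finally have e: "PB * fps_exp (x+1) - PB * fps_exp x = fps_X * fps_exp (x+1)" .
  have "Sp (Suc k) (x+1) - Sp (Suc k) x = fact (Suc k) * (PB * fps_exp (x+1) - PB * fps_exp x) $ Suc k"
    by (simp add: Sp_fps algebra_simps)
  also have "\<dots> = fact (Suc k) * (x+1)^k / fact k"
    unfolding e by simp
  also have "\<dots> = of_nat (Suc k) * (x+1)^k"
    by (simp add: field_simps)
  finally show ?thesis .
qed

definition frefl :: "complex fps \<Rightarrow> complex fps" where
  "frefl f = Abs_fps (\<lambda>n. (-1)^n * f $ n)"

lemma frefl_nth [simp]: "frefl f $ n = (-1)^n * f $ n"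
  by (simp add: frefl_def)

lemma frefl_mult: "frefl (f * g) = frefl f * frefl g"
proof (rule fps_ext)
  fix n
  have "frefl (f * g) $ n = (\<Sum>i=0..n. (-1)^n * (f $ i * g $ (n - i)))"
    by (simp add: fps_mult_nth sum_distrib_left)
  also have "\<dots> = (\<Sum>i=0..n. ((-1)^i * f $ i) * ((-1)^(n-i) * g $ (n - i)))"
  proof (intro sum.cong refl)
    fix i assume "i \<in> {0..n}"
    then have "(-1::complex)^n = (-1)^i * (-1)^(n-i)"
      by (simp add: power_add[symmetric])
    then show "(-1)^n * (f $ i * g $ (n - i)) = ((-1)^i * f $ i) * ((-1)^(n-i) * g $ (n - i))"
      by simp
  qed
  also have "\<dots> = (frefl f * frefl g) $ n"
    by (simp add: fps_mult_nth)
  finally show "frefl (f * g) $ n = (frefl f * frefl g) $ n" .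
qed

lemma frefl_diff: "frefl (f - g) = frefl f - frefl g"
  by (rule fps_ext) (simp add: algebra_simps)

lemma frefl_exp: "frefl (fps_exp c) = fps_exp (-c)"
  by (rule fps_ext) (simp add: power_minus')

lemma frefl_X: "frefl fps_X = - fps_X"
  by (rule fps_ext) (simp add: fps_X_def)

lemma frefl_one: "frefl 1 = 1"
  by (rule fps_ext) simp

lemma frefl_PB: "frefl PB = PB * fps_exp (-1)"
proof -
  have "frefl PB * (fps_exp (-1) - 1) = - fps_X * fps_exp (-1)"
    using arg_cong[OF PB_mult, of frefl]
    by (simp add: frefl_mult frefl_diff frefl_exp frefl_X frefl_one)
  then have "frefl PB * (fps_exp (-1) - 1) * fps_exp 1 = - fps_X * fps_exp (-1) * fps_exp 1"
    by simp
  moreover have e0': "fps_exp (-1::complex) * fps_exp 1 = 1"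
    by (simp add: fps_exp_add_mult[symmetric])
  ultimately have "frefl PB * (1 - fps_exp 1) = - fps_X"
    by (simp only: mult.assoc left_diff_distrib e0' mult_1_left mult_1_right)
  then have a: "frefl PB * (fps_exp 1 - 1) = fps_X"
    by (metis minus_diff_eq mult_minus_right neg_equal_iff_equal)
  have e0: "fps_exp (1::complex) * fps_exp (-1) = 1"
    by (simp add: fps_exp_add_mult[symmetric])
  have "PB * fps_exp (-1) * (fps_exp 1 - 1) = (PB * (fps_exp 1 - 1)) * fps_exp (-1)"
    by (simp add: mult_ac)
  also have "\<dots> = fps_X * (fps_exp 1 * fps_exp (-1))"
    by (simp add: PB_mult mult_ac)
  finally have b: "PB * fps_exp (-1) * (fps_exp 1 - 1) = fps_X"
    by (simp add: e0)
  show ?thesis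
    using a b E1_nz by (metis mult_right_cancel)
qed

lemma Sp_refl: "Sp n (b - 1) = (-1)^n * Sp n (-b)"
proof -
  have "PB * fps_exp (b - 1) = frefl PB * frefl (fps_exp (-b))"
    by (simp add: frefl_PB frefl_exp fps_exp_add_mult[symmetric] mult.assoc)
  also have "\<dots> = frefl (PB * fps_exp (-b))"
    by (simp add: frefl_mult)
  finally show ?thesis
    by (simp add: Sp_fps)
qed

lemma PB0: "PB $ 0 = 1"
  using PB_rec[of 0] by simp

lemma em_poly:
  fixes c :: "nat \<Rightarrow> complex"
  shows "(\<Sum>j\<le>K. PB $ j * ((\<Sum>i\<le>Suc K - j. c (j+i) / fact i) - c j)) = (\<Sum>i\<le>K. c (Suc i) / fact i)"
proof (induction K)
  case 0
  then show ?case by (simp add: PB0)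
next
  case (Suc K)
  have step: "(\<Sum>i\<le>Suc (Suc K) - j. c (j+i) / fact i) = (\<Sum>i\<le>Suc K - j. c (j+i) / fact i) + c (Suc (Suc K)) / fact (Suc (Suc K) - j)"
    if "j \<le> Suc K" for j
  proof -
    have "Suc (Suc K) - j = Suc (Suc K - j)" using that by simp
    then show ?thesis using that by (simp add: sum.atMost_Suc)
  qed
  have "(\<Sum>j\<le>Suc K. PB $ j * ((\<Sum>i\<le>Suc (Suc K) - j. c (j+i) / fact i) - c j))
      = (\<Sum>j\<le>Suc K. PB $ j * ((\<Sum>i\<le>Suc K - j. c (j+i) / fact i) - c j)
           + c (Suc (Suc K)) * (PB $ j / fact (Suc (Suc K) - j)))"
    by (intro sum.cong refl) (simp add: step algebra_simps)
  also have "\<dots> = (\<Sum>j\<le>Suc K. PB $ j * ((\<Sum>i\<le>Suc K - j. c (j+i) / fact i) - c j))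
           + c (Suc (Suc K)) * (\<Sum>j\<le>Suc K. PB $ j / fact (Suc (Suc K) - j))"
    by (simp add: sum.distrib sum_distrib_left distrib_left)
  also have "(\<Sum>j\<le>Suc K. PB $ j / fact (Suc (Suc K) - j)) = 1 / fact (Suc K)"
    by (rule PB_rec)
  also have "(\<Sum>j\<le>Suc K. PB $ j * ((\<Sum>i\<le>Suc K - j. c (j+i) / fact i) - c j))
      = (\<Sum>j\<le>K. PB $ j * ((\<Sum>i\<le>Suc K - j. c (j+i) / fact i) - c j))"
    by (simp add: sum.atMost_Suc)
  also have "\<dots> = (\<Sum>i\<le>K. c (Suc i) / fact i)" by (rule Suc.IH)
  finally show ?case by (simp add: sum.atMost_Suc)
qed

lemma em_step:
  fixes g :: "nat \<Rightarrow> complex \<Rightarrow> complex"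
  assumes S: "convex S" and u: "u \<in> S" "u + 1 \<in> S"
    and d: "\<And>i v. v \<in> S \<Longrightarrow> i \<le> K + 1 \<Longrightarrow> (g i has_field_derivative g (Suc i) v) (at v within S)"
    and B: "\<And>v. v \<in> S \<Longrightarrow> norm (g (K+2) v) \<le> B"
  shows "norm (g 1 (u+1) - (g 0 (u+1) - g 0 u) - (\<Sum>j=1..K. PB$j * (g j (u+1) - g j u)))
           \<le> (2 + (\<Sum>j=1..K. norm (PB$j))) * B"
proof -
  have B0: "0 \<le> B" using B[OF u(1)] norm_ge_zero order_trans by blast
  define T where "T j = (\<Sum>i\<le>Suc K - j. g (j+i) u / fact i)" for j
  have tay: "norm (g j (u+1) - T j) \<le> B" if j: "j \<le> Suc K" for j
  proof -
    have "norm ((\<lambda>i. g (j+i)) 0 (u+1) - (\<Sum>i\<le>Suc K - j. (\<lambda>i. g (j+i)) i u * ((u+1)-u) ^ i / (fact i)))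
          \<le> B * norm ((u+1) - u)^(Suc (Suc K - j)) / fact (Suc K - j)"
    proof (rule complex_Taylor[OF S _ _ u])
      fix i x assume x: "x \<in> S" and i: "i \<le> Suc K - j"
      then have "j + i \<le> K + 1" using j by simp
      then show "(g (j + i) has_field_derivative g (j + Suc i) x) (at x within S)"
        using d[OF x, of "j+i"] by simp
    next
      fix x assume x: "x \<in> S"
      have "j + Suc (Suc K - j) = K + 2" using j by simp
      then show "cmod (g (j + Suc (Suc K - j)) x) \<le> B"
        using B[OF x] by simp
    qed
    also have "\<dots> = B / fact (Suc K - j)" by simp
    also have "\<dots> \<le> B / 1"
      by (rule divide_left_mono) (use B0 in \<open>auto simp: fact_ge_1\<close>)
    finally show ?thesis by (simp add: T_def)
  qed
  have poly: "T 1 = (T 0 - g 0 u) + (\<Sum>j=1..K. PB$j * (T j - g j u))"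
  proof -
    have "(\<Sum>j\<le>K. PB $ j * ((\<Sum>i\<le>Suc K - j. g (j+i) u / fact i) - g j u)) = (\<Sum>i\<le>K. g (Suc i) u / fact i)"
      by (rule em_poly)
    moreover have "(\<Sum>j\<le>K. PB $ j * (T j - g j u)) = (T 0 - g 0 u) + (\<Sum>j=1..K. PB$j * (T j - g j u))"
      by (simp add: PB0 atMost_atLeast0 sum.atLeast_Suc_atMost)
    ultimately show ?thesis by (simp add: T_def)
  qed
  define e where "e j = g j (u+1) - T j" for j
  have "g 1 (u+1) - (g 0 (u+1) - g 0 u) - (\<Sum>j=1..K. PB$j * (g j (u+1) - g j u))
      = e 1 - e 0 - (\<Sum>j=1..K. PB$j * e j)"
    using poly by (simp add: e_def algebra_simps sum_subtractf sum.distrib)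
  also have "norm \<dots> \<le> norm (e 1) + norm (e 0) + (\<Sum>j=1..K. norm (PB$j) * norm (e j))"
    by (rule order_trans[OF norm_triangle_ineq4]) 
       (auto intro!: add_mono order_trans[OF norm_triangle_ineq4] order_trans[OF norm_sum] simp: norm_mult)
  also have "\<dots> \<le> B + B + (\<Sum>j=1..K. norm (PB$j) * B)"
    by (intro add_mono sum_mono mult_left_mono) (auto simp: e_def intro!: tay)
  also have "\<dots> = (2 + (\<Sum>j=1..K. norm (PB$j))) * B"
    by (simp add: algebra_simps sum_distrib_left)
  finally show ?thesis .
qed

definition gf :: "complex \<Rightarrow> nat \<Rightarrow> complex \<Rightarrow> complex" where
  "gf s j u = (if j = 0 then (if s = 1 then Ln u else u powr (1 - s) / (1 - s))
              else (-1)^(j-1) * pochhammer s (j-1) * u powr (1 - s - of_nat j))"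

lemma gf_1: "gf s 1 u = u powr (- s)"
  by (simp add: gf_def)

lemma Re_pos_notin: "0 < Re u \<Longrightarrow> u \<notin> \<real>\<^sub>\<le>\<^sub>0"
  by (auto simp: complex_nonpos_Reals_iff)

lemma powr_minus_one_c: "(u::complex) powr (-1) = inverse u"
  by (cases "u = 0") (simp_all add: powr_def exp_minus)

lemma gf_deriv:
  assumes u: "0 < Re u"
  shows "(gf s j has_field_derivative gf s (Suc j) u) (at u)"
proof -
  have nz: "u \<notin> \<real>\<^sub>\<le>\<^sub>0" using u by (rule Re_pos_notin)
  have pw: "((\<lambda>u. u powr e) has_field_derivative (e * u powr (e - 1))) (at u)" for e
    using has_field_derivative_powr[OF nz] .
  show ?thesis
  proof (cases j)
    case 0
    show ?thesis
    proof (cases "s = 1")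
      case True
      have "gf s j = Ln" using True 0 by (auto simp: gf_def)
      moreover have "gf s (Suc j) u = inverse u"
        using True 0 by (simp add: gf_def powr_minus_one_c)
      ultimately show ?thesis using has_field_derivative_Ln[OF nz] by simp
    next
      case False
      have e: "gf s j = (\<lambda>u. inverse (1 - s) * u powr (1 - s))" using False 0
        by (auto simp: gf_def field_simps)
      have "((\<lambda>u. inverse (1 - s) * u powr (1 - s)) has_field_derivative
               inverse (1 - s) * ((1 - s) * u powr (1 - s - 1))) (at u)"
        by (rule DERIV_cmult[OF pw])
      moreover have "inverse (1 - s) * ((1 - s) * u powr (1 - s - 1)) = gf s (Suc j) u"
        using False 0 by (simp add: gf_def)
      ultimately show ?thesis using e by simp
    qed
  next
    case (Suc i)
    define c where "c = (-1)^i * pochhammer s i"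
    have e: "gf s j = (\<lambda>u. c * u powr (1 - s - of_nat (Suc i)))" using Suc
      by (auto simp: gf_def c_def)
    have "((\<lambda>u. c * u powr (1 - s - of_nat (Suc i))) has_field_derivative
               c * ((1 - s - of_nat (Suc i)) * u powr (1 - s - of_nat (Suc i) - 1))) (at u)"
      by (rule DERIV_cmult[OF pw])
    moreover have "c * ((1 - s - of_nat (Suc i)) * u powr (1 - s - of_nat (Suc i) - 1)) = gf s (Suc j) u"
    proof -
      have ex: "1 - s - of_nat (Suc i) - 1 = 1 - s - of_nat (Suc (Suc i))" by simp
      show ?thesis using Suc unfolding ex by (simp add: gf_def c_def pochhammer_Suc algebra_simps)
    qed
    ultimately show ?thesis using e by simp
  qed
qed

lemma norm_powr_bound:
  fixes v e :: complex
  shows "norm (v powr e) \<le> norm v powr Re e * exp (\<bar>Im e\<bar> * pi)"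
proof -
  have "-Im e * Arg v \<le> \<bar>Im e\<bar> * pi"
  proof -
    have "\<bar>Arg v\<bar> \<le> pi" using Arg_bounded[of v] by auto
    then have "\<bar>Im e\<bar> * \<bar>Arg v\<bar> \<le> \<bar>Im e\<bar> * pi" by (rule mult_left_mono) simp
    moreover have "-Im e * Arg v \<le> \<bar>Im e\<bar> * \<bar>Arg v\<bar>"
      by (metis abs_ge_self abs_minus_cancel abs_mult)
    ultimately show ?thesis by linarith
  qed
  then show ?thesis
    by (simp add: norm_powr_complex mult_left_mono)
qed

lemma gf_top_bound:
  assumes "1 \<le> r" "r \<le> norm v" "0 < Re s + of_nat K + 1"
  shows "norm (gf s (K+2) v) \<le> norm (pochhammer s (K+1)) * r powr (-(Re s + of_nat K + 1)) * exp (\<bar>Im s\<bar> * pi)"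
proof -
  have e: "gf s (K+2) v = (-1)^(K+1) * pochhammer s (K+1) * v powr (1 - s - of_nat (K+2))"
    by (simp add: gf_def)
  have "norm (v powr (1 - s - of_nat (K+2))) \<le> norm v powr (-(Re s + of_nat K + 1)) * exp (\<bar>Im s\<bar> * pi)"
    using norm_powr_bound[of v "1 - s - of_nat (K+2)"] by simp
  also have "\<dots> \<le> r powr (-(Re s + of_nat K + 1)) * exp (\<bar>Im s\<bar> * pi)"
    by (intro mult_right_mono powr_mono2') (use assms in auto)
  finally show ?thesis
    unfolding e norm_mult by (simp add: norm_power mult.assoc mult_left_mono)
qed

definition N0 :: "complex \<Rightarrow> nat" where "N0 a = nat \<lceil>2 * norm a\<rceil> + 2"
definition uu :: "complex \<Rightarrow> nat \<Rightarrow> complex" where "uu a n = of_nat (N0 a + n) + a"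
definition rr :: "complex \<Rightarrow> nat \<Rightarrow> real" where "rr a n = real (N0 a + n) - norm a"
definition TT :: "nat \<Rightarrow> complex \<Rightarrow> complex \<Rightarrow> complex" where
  "TT K s v = gf s 1 (v+1) - (gf s 0 (v+1) - gf s 0 v) - (\<Sum>j=1..K. PB$j * (gf s j (v+1) - gf s j v))"
definition CK :: "nat \<Rightarrow> real" where "CK K = 2 + (\<Sum>j=1..K. norm (PB$j))"

lemma N0_ge: "2 * norm a + 2 \<le> real (N0 a)"
proof -
  have "2 * norm a \<le> real (nat \<lceil>2 * norm a\<rceil>)" by linarith
  then show ?thesis by (simp add: N0_def)
qed

lemma rr_ge: "real n + 2 \<le> rr a n"
  unfolding rr_def of_nat_add using N0_ge[of a] norm_ge_zero[of a] by linarith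

lemma Re_uu: "rr a n \<le> Re (uu a n)"
  using abs_Re_le_cmod[of a] by (simp add: rr_def uu_def)

lemma CK_nonneg: "0 \<le> CK K"
  unfolding CK_def by (intro add_nonneg_nonneg sum_nonneg) auto

lemma TT_bound:
  assumes "0 < Re s + of_nat K + 1"
  shows "norm (TT K s (uu a n)) \<le> CK K * (norm (pochhammer s (K+1)) * rr a n powr (-(Re s + of_nat K + 1)) * exp (\<bar>Im s\<bar> * pi))"
proof -
  define S where "S = {v. rr a n \<le> Re v}"
  have r1: "1 \<le> rr a n" using rr_ge[of n a] by simp
  show ?thesis
    unfolding TT_def CK_def
  proof (rule em_step)
    show "convex S" unfolding S_def by (rule convex_halfspace_Re_ge)
    have "rr a n \<le> Re (uu a n)" by (rule Re_uu)
    then show "uu a n \<in> S" "uu a n + 1 \<in> S" unfolding S_def mem_Collect_eq plus_complex.sel one_complex.sel by linarith+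
  next
    fix i v assume v: "v \<in> S"
    then have "rr a n \<le> Re v" unfolding S_def by simp
    then have "0 < Re v" using r1 by (meson less_le_trans order_trans zero_less_one)
    then show "(gf s i has_field_derivative gf s (Suc i) v) (at v within S)"
      by (rule has_field_derivative_at_within[OF gf_deriv])
  next
    fix v assume v: "v \<in> S"
    have "rr a n \<le> Re v" using v unfolding S_def by simp
    then have "rr a n \<le> norm v" using complex_Re_le_cmod[of v] by (rule order_trans)
    then show "norm (gf s (K+2) v) \<le> norm (pochhammer s (K+1)) * rr a n powr (-(Re s + of_nat K + 1)) * exp (\<bar>Im s\<bar> * pi)"
      by (intro gf_top_bound r1 assms)
  qed
qed

lemma D_holo:
  assumes w: "w \<noteq> 0" and v: "v \<noteq> 0"
  shows "(\<lambda>s. gf s 0 w - gf s 0 v) holomorphic_on UNIV"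
proof -
  define h where "h s = exp ((1 - s) * Ln w) - exp ((1 - s) * Ln v)" for s
  have hh: "h holomorphic_on UNIV" unfolding h_def by (intro holomorphic_intros)
  have h1: "h 1 = 0" by (simp add: h_def)
  have "(h has_field_derivative (- Ln w + Ln v)) (at 1)"
    unfolding h_def by (rule derivative_eq_intros refl | simp)+
  then have dh: "deriv h 1 = - Ln w + Ln v" by (rule DERIV_imp_deriv)
  have "(\<lambda>z. if z = 1 then deriv h 1 else (h z - h 1) / (z - 1)) holomorphic_on UNIV"
    by (rule pole_lemma[OF hh]) simp
  then have "(\<lambda>z. - (if z = 1 then deriv h 1 else (h z - h 1) / (z - 1))) holomorphic_on UNIV"
    by (intro holomorphic_intros)
  also have "?this \<longleftrightarrow> ?thesis"
  proof (rule holomorphic_cong, simp)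
    fix z :: complex
    show "- (if z = 1 then deriv h 1 else (h z - h 1) / (z - 1)) = gf z 0 w - gf z 0 v"
    proof (cases "z = 1")
      case True then show ?thesis by (simp add: dh gf_def)
    next
      case False
      have hz: "h z = w powr (1-z) - v powr (1-z)"
        using w v by (simp add: h_def powr_def mult.commute)
      have e1: "- ((h z - h 1)/(z-1)) = h z / (1 - z)"
        using False by (simp add: h1 field_simps)
      show ?thesis using False e1 hz
        by (simp add: gf_def diff_divide_distrib)
    qed
  qed
  finally show ?thesis .
qed

lemma gfj_holo:
  assumes "j \<noteq> 0"
  shows "(\<lambda>s. gf s j w) holomorphic_on UNIV"
  using assms unfolding gf_def by (simp, intro holomorphic_intros)

lemma TT_holo:
  assumes "0 < Re v"
  shows "(\<lambda>s. TT K s v) holomorphic_on UNIV"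
proof -
  have "0 < Re (v + 1)" using assms by simp
  then have v: "v \<noteq> 0" "v + 1 \<noteq> 0" using assms by (auto simp: complex_eq_iff)
  show ?thesis
    unfolding TT_def
    by (intro holomorphic_intros D_holo gfj_holo) (use v in auto)
qed

lemma norm_poch_le:
  fixes y :: complex
  assumes "norm y \<le> R"
  shows "norm (pochhammer y n) \<le> pochhammer R n"
proof (induction n)
  case 0 then show ?case by simp
next
  case (Suc n)
  have R0: "0 \<le> R" using assms norm_ge_zero order_trans by blast
  have "norm (pochhammer y (Suc n)) = norm (pochhammer y n) * norm (y + of_nat n)"
    by (simp add: pochhammer_Suc norm_mult)
  also have "\<dots> \<le> pochhammer R n * (R + of_nat n)"
  proof (rule mult_mono[OF Suc.IH])
    show "norm (y + of_nat n) \<le> R + of_nat n"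
      using norm_triangle_ineq[of y "of_nat n"] assms by simp
    show "0 \<le> pochhammer R n"
      using R0 by (cases "R = 0") (auto intro: pochhammer_nonneg simp: pochhammer_0_left)
  qed simp
  finally show ?case by (simp add: pochhammer_Suc)
qed

definition Zf :: "complex \<Rightarrow> nat \<Rightarrow> complex \<Rightarrow> complex" where
  "Zf a K s = (\<Sum>n. TT K s (uu a n))"

lemma uu_Re_pos: "0 < Re (uu a n)"
  using Re_uu[of a n] rr_ge[of n a] by linarith

lemma Zf_props:
  "Zf a K holomorphic_on {s. - real K < Re s} \<and>
   (\<forall>s. - real K < Re s \<longrightarrow> (\<lambda>n. TT K s (uu a n)) sums Zf a K s)"
proof -
  define S where "S = {s. - real K < Re s}"
  have oS: "open S" unfolding S_def by (rule open_halfspace_Re_gt)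
  have hol_n: "(\<lambda>s. TT K s (uu a n)) holomorphic_on UNIV" for n
    by (rule TT_holo[OF uu_Re_pos])
  have "\<exists>g g'. \<forall>x \<in> S. ((\<lambda>n. TT K x (uu a n)) sums g x) \<and>
          ((\<lambda>n. deriv (\<lambda>s. TT K s (uu a n)) x) sums g' x) \<and> (g has_field_derivative g' x) (at x)"
  proof (rule series_and_derivative_comparison_local[OF oS])
    fix n x
    show "((\<lambda>s. TT K s (uu a n)) has_field_derivative deriv (\<lambda>s. TT K s (uu a n)) x) (at x)"
      using holomorphic_derivI[OF hol_n open_UNIV UNIV_I, of n x UNIV] by simp
  next
    fix x assume x: "x \<in> S"
    define d where "d = (Re x + real K) / 2"
    have d0: "0 < d" using x by (simp add: S_def d_def)
    define M where "M = CK K * pochhammer (norm x + d) (K+1) * exp ((norm x + d) * pi)"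
    define h where "h n = M * real n powr (-(1+d))" for n
    have sh: "summable h"
      unfolding h_def by (intro summable_mult) (simp add: summable_real_powr_iff d0)
    have ev: "\<forall>\<^sub>F n in sequentially. \<forall>y\<in>ball x d \<inter> S. norm (TT K y (uu a n)) \<le> h n"
    proof (rule eventually_sequentiallyI[of 1], intro ballI)
      fix n :: nat and y assume n: "1 \<le> n" and y: "y \<in> ball x d \<inter> S"
      have dxy: "norm (x - y) < d" using y by (simp add: dist_norm)
      have ny: "norm y \<le> norm x + d"
        using norm_triangle_ineq2[of y x] dxy by (simp add: norm_minus_commute)
      have rey: "Re x - d < Re y"
        using abs_Re_le_cmod[of "x - y"] dxy by simp
      have pos: "0 < Re y + of_nat K + 1" using rey d0 unfolding d_def by (simp add: field_simps)
      have imy: "\<bar>Im y\<bar> \<le> norm x + d" using abs_Im_le_cmod[of y] ny by linarith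
      have r1: "1 \<le> rr a n" using rr_ge[of n a] by simp
      have pn: "0 \<le> pochhammer (norm x + d) (K+1)"
        by (rule pochhammer_nonneg) (use d0 in \<open>simp add: add_nonneg_pos\<close>)
      have rn: "real n \<le> rr a n" using rr_ge[of n a] by simp
      have p1: "rr a n powr (-(Re y + of_nat K + 1)) \<le> rr a n powr (-(1+d))"
        by (rule powr_mono) (use rey r1 in \<open>auto simp: d_def field_simps\<close>)
      have p2: "rr a n powr (-(1+d)) \<le> real n powr (-(1+d))"
        by (rule powr_mono2') (use n rn d0 in auto)
      have "norm (TT K y (uu a n)) \<le> CK K * (norm (pochhammer y (K+1)) * rr a n powr (-(Re y + of_nat K + 1)) * exp (\<bar>Im y\<bar> * pi))"
        by (rule TT_bound[OF pos])
      also have "\<dots> \<le> CK K * (pochhammer (norm x + d) (K+1) * real n powr (-(1+d)) * exp ((norm x + d) * pi))"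
      proof (rule mult_left_mono[OF _ CK_nonneg])
        have e: "exp (\<bar>Im y\<bar> * pi) \<le> exp ((norm x + d) * pi)"
          using imy by simp
        have q: "norm (pochhammer y (K+1)) * rr a n powr (-(Re y + of_nat K + 1))
                 \<le> pochhammer (norm x + d) (K+1) * real n powr (-(1+d))"
          by (rule mult_mono[OF norm_poch_le[OF ny] order_trans[OF p1 p2] pn]) simp
        show "norm (pochhammer y (K+1)) * rr a n powr (-(Re y + of_nat K + 1)) * exp (\<bar>Im y\<bar> * pi)
              \<le> pochhammer (norm x + d) (K+1) * real n powr (-(1+d)) * exp ((norm x + d) * pi)"
          by (rule mult_mono[OF q e]) (use pn in auto)
      qed
      also have "\<dots> = h n" by (simp add: h_def M_def mult_ac)
      finally show "norm (TT K y (uu a n)) \<le> h n" .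
    qed
    show "\<exists>d h. 0 < d \<and> summable h \<and> (\<forall>\<^sub>F n in sequentially. \<forall>y\<in>ball x d \<inter> S. norm (TT K y (uu a n)) \<le> h n)"
      by (intro exI[of _ d] exI[of _ h] conjI d0 sh ev)
  qed
  then obtain g g' where g: "\<And>x. x \<in> S \<Longrightarrow> ((\<lambda>n. TT K x (uu a n)) sums g x) \<and> (g has_field_derivative g' x) (at x)"
    by metis
  have eq: "Zf a K x = g x" if "x \<in> S" for x
    using g[OF that] by (simp add: Zf_def sums_iff)
  have "g holomorphic_on S"
    unfolding holomorphic_on_def field_differentiable_def
  proof
    fix x assume "x \<in> S"
    then have "(g has_field_derivative g' x) (at x)" using g by simp
    then show "\<exists>f'. (g has_field_derivative f') (at x within S)"
      using has_field_derivative_at_within by blast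
  qed
  moreover have "Zf a K holomorphic_on S \<longleftrightarrow> g holomorphic_on S"
    by (rule holomorphic_cong) (simp_all add: eq)
  ultimately have "Zf a K holomorphic_on S" by simp
  moreover have "\<forall>s. - real K < Re s \<longrightarrow> (\<lambda>n. TT K s (uu a n)) sums Zf a K s"
    using g eq by (auto simp: S_def)
  ultimately show ?thesis by (simp add: S_def)
qed

definition RK :: "complex \<Rightarrow> nat \<Rightarrow> complex \<Rightarrow> complex" where
  "RK a K s = (\<Sum>m<N0 a. (of_nat (Suc m) + a) powr (-s)) + Zf a K s - (\<Sum>j=1..K. PB$j * gf s j (uu a 0))"

lemma RK_holo: "RK a K holomorphic_on {s. - real K < Re s}"
proof -
  have h1: "(\<lambda>s. \<Sum>m<N0 a. (of_nat (Suc m) + a) powr (-s)) holomorphic_on {s. - real K < Re s}"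
    by (intro holomorphic_intros)
  have h2: "Zf a K holomorphic_on {s. - real K < Re s}" using Zf_props by blast
  have h3: "(\<lambda>s. \<Sum>j=1..K. PB$j * gf s j (uu a 0)) holomorphic_on {s. - real K < Re s}"
  proof (intro holomorphic_on_sum holomorphic_on_mult holomorphic_on_const)
    fix j assume "j \<in> {1..K}"
    then have "j \<noteq> 0" by simp
    then show "(\<lambda>s. gf s j (uu a 0)) holomorphic_on {s. - real K < Re s}"
      using holomorphic_on_subset[OF gfj_holo] by blast
  qed
  show ?thesis unfolding RK_def
    by (intro holomorphic_on_diff holomorphic_on_add h1 h2 h3)
qed

lemma rr_tendsto: "filterlim (rr a) at_top sequentially"
proof (rule filterlim_at_top_mono[OF filterlim_real_sequentially])
  show "\<forall>\<^sub>F x in sequentially. real x \<le> rr a x"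
    using rr_ge[of _ a] by (intro always_eventually allI) (meson add_increasing2 le_add_same_cancel1 order_trans zero_le_numeral)
qed

lemma uu_powr_lim:
  assumes "Re e < 0"
  shows "(\<lambda>n. uu a n powr e) \<longlonglongrightarrow> 0"
proof (rule Lim_null_comparison)
  show "\<forall>\<^sub>F n in sequentially. norm (uu a n powr e) \<le> rr a n powr Re e * exp (\<bar>Im e\<bar> * pi)"
  proof (intro always_eventually allI)
    fix n
    have r0: "0 < rr a n" using rr_ge[of n a] by simp
    have "rr a n \<le> Re (uu a n)" by (rule Re_uu)
    then have rn: "rr a n \<le> norm (uu a n)" using complex_Re_le_cmod by (rule order_trans)
    have "norm (uu a n powr e) \<le> norm (uu a n) powr Re e * exp (\<bar>Im e\<bar> * pi)"
      by (rule norm_powr_bound)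
    also have "\<dots> \<le> rr a n powr Re e * exp (\<bar>Im e\<bar> * pi)"
      by (intro mult_right_mono powr_mono2' rn r0) (use assms in auto)
    finally show "norm (uu a n powr e) \<le> rr a n powr Re e * exp (\<bar>Im e\<bar> * pi)" .
  qed
  show "(\<lambda>n. rr a n powr Re e * exp (\<bar>Im e\<bar> * pi)) \<longlonglongrightarrow> 0"
    by (intro tendsto_mult_left_zero tendsto_neg_powr rr_tendsto assms)
qed

definition GG :: "nat \<Rightarrow> complex \<Rightarrow> complex \<Rightarrow> complex" where
  "GG K s v = gf s 0 v + (\<Sum>j=1..K. PB$j * gf s j v)"

lemma gf_lim:
  assumes "1 < Re s"
  shows "(\<lambda>n. gf s j (uu a n)) \<longlonglongrightarrow> 0"
proof (cases "j = 0")
  case True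
  have s1: "s \<noteq> 1" using assms by auto
  have "(\<lambda>n. uu a n powr (1 - s) / (1 - s)) \<longlonglongrightarrow> 0"
    by (rule tendsto_divide_zero[OF uu_powr_lim]) (use assms in simp)
  then show ?thesis using True s1 by (simp add: gf_def)
next
  case False
  have "(\<lambda>n. (-1)^(j-1) * pochhammer s (j-1) * uu a n powr (1 - s - of_nat j)) \<longlonglongrightarrow> (-1)^(j-1) * pochhammer s (j-1) * 0"
    by (intro tendsto_mult tendsto_const uu_powr_lim) (use assms in simp)
  then show ?thesis using False by (simp add: gf_def)
qed

lemma GG_lim:
  assumes "1 < Re s"
  shows "(\<lambda>n. GG K s (uu a n)) \<longlonglongrightarrow> 0"
proof -
  have "(\<lambda>n. gf s 0 (uu a n) + (\<Sum>j=1..K. PB$j * gf s j (uu a n))) \<longlonglongrightarrow> 0 + (\<Sum>j=1..K. PB$j * 0)"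
    by (intro tendsto_add tendsto_sum tendsto_mult tendsto_const gf_lim assms)
  then show ?thesis by (simp add: GG_def)
qed

lemma uu_Suc: "uu a n + 1 = uu a (Suc n)"
  by (simp add: uu_def)

lemma TT_GG: "TT K s (uu a n) = uu a (Suc n) powr (-s) - (GG K s (uu a (Suc n)) - GG K s (uu a n))"
  unfolding TT_def GG_def uu_Suc gf_1
  by (simp add: algebra_simps sum_subtractf)

lemma RK_sums:
  assumes s: "1 < Re s"
  shows "(\<lambda>m. (of_nat (Suc m) + a) powr (-s)) sums (RK a K s + uu a 0 powr (1-s) / (s-1))"
proof -
  define f where "f m = (of_nat (Suc m) + a) powr (-s)" for m
  have Ts: "(\<lambda>n. TT K s (uu a n)) sums Zf a K s"
    using Zf_props[of a K] s by auto
  have tel: "(\<lambda>n. GG K s (uu a (Suc n)) - GG K s (uu a n)) sums (0 - GG K s (uu a 0))"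
    by (rule telescope_sums[OF GG_lim[OF s]])
  have "(\<lambda>n. TT K s (uu a n) + (GG K s (uu a (Suc n)) - GG K s (uu a n))) sums (Zf a K s + (0 - GG K s (uu a 0)))"
    by (rule sums_add[OF Ts tel])
  moreover have "TT K s (uu a n) + (GG K s (uu a (Suc n)) - GG K s (uu a n)) = f (n + N0 a)" for n
  proof -
    have e: "uu a (Suc n) powr (-s) = f (n + N0 a)" by (simp add: f_def uu_def add_ac)
    show ?thesis by (simp only: TT_GG) (simp add: e)
  qed
  ultimately have "(\<lambda>n. f (n + N0 a)) sums (Zf a K s - GG K s (uu a 0))" by simp
  then have "f sums (Zf a K s - GG K s (uu a 0) + (\<Sum>i<N0 a. f i))"
    by (simp add: sums_iff_shift)
  moreover have "Zf a K s - GG K s (uu a 0) + (\<Sum>i<N0 a. f i) = RK a K s + uu a 0 powr (1-s) / (s-1)"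
  proof -
    have s1: "s \<noteq> 1" using s by auto
    have "uu a 0 powr (1-s) / (s-1) = - (uu a 0 powr (1-s) / (1-s))"
      by (simp add: divide_simps) (use s1 in \<open>simp add: algebra_simps\<close>)
    then show ?thesis using s1 by (simp add: RK_def GG_def f_def gf_def)
  qed
  ultimately have "f sums (RK a K s + uu a 0 powr (1-s) / (s-1))" by simp
  then show ?thesis unfolding f_def[abs_def] .
qed

lemma abs_summable:
  assumes s: "1 < Re s"
  shows "summable (\<lambda>m. norm ((of_nat (Suc m) + a) powr (-s)))"
proof (rule summable_comparison_test')
  show "summable (\<lambda>m. exp (\<bar>Im s\<bar> * pi) * (real m powr (- Re s) / 2 powr (- Re s)))"
    by (intro summable_mult summable_divide) (simp add: summable_real_powr_iff s)
next
  fix m assume m: "N0 a \<le> m"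
  define w where "w = of_nat (Suc m) + a"
  have "2 * norm a + 2 \<le> real m" using N0_ge[of a] m by linarith
  moreover have "Re w = real m + 1 + Re a" by (simp add: w_def)
  moreover have "- norm a \<le> Re a" using abs_Re_le_cmod[of a] by linarith
  ultimately have "real m / 2 \<le> Re w" by (simp add: field_simps)
  then have wm: "real m / 2 \<le> norm w" using complex_Re_le_cmod by (rule order_trans)
  have "2 \<le> N0 a" by (simp add: N0_def)
  then have m0: "0 < real m / 2" using m by simp
  have "norm (norm (w powr (-s))) \<le> norm w powr Re (-s) * exp (\<bar>Im (-s)\<bar> * pi)"
    using norm_powr_bound[of w "-s"] by simp
  also have "\<dots> \<le> (real m / 2) powr Re (-s) * exp (\<bar>Im (-s)\<bar> * pi)"
    by (intro mult_right_mono powr_mono2' wm m0) (use s in auto)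
  also have "\<dots> = exp (\<bar>Im s\<bar> * pi) * (real m powr (- Re s) / 2 powr (- Re s))"
    by (simp add: powr_divide)
  finally show "norm (norm ((of_nat (Suc m) + a) powr (-s))) \<le> exp (\<bar>Im s\<bar> * pi) * (real m powr (- Re s) / 2 powr (- Re s))"
    by (simp add: w_def)
qed

lemma RK_agree:
  assumes "- real K < Re s" "- real K' < Re s"
  shows "RK a K s = RK a K' s"
proof (rule analytic_continuation_open[of "{s. 1 < Re s}" "{s. - real (min K K') < Re s}" "RK a K" "RK a K'" s])
  show "open {s. 1 < Re s}" by (rule open_halfspace_Re_gt)
  show "open {s. - real (min K K') < Re s}" by (rule open_halfspace_Re_gt)
  have "(2::complex) \<in> {s. 1 < Re s}" by simp
  then show "{s. 1 < Re s} \<noteq> {}" by blast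
  show "connected {s. - real (min K K') < Re s}"
    by (rule convex_connected[OF convex_halfspace_Re_gt])
  show "{s. 1 < Re s} \<subseteq> {s. - real (min K K') < Re s}" by auto
  show "RK a K holomorphic_on {s. - real (min K K') < Re s}"
    by (rule holomorphic_on_subset[OF RK_holo]) auto
  show "RK a K' holomorphic_on {s. - real (min K K') < Re s}"
    by (rule holomorphic_on_subset[OF RK_holo]) auto
  show "s \<in> {s. - real (min K K') < Re s}" using assms by (auto simp: min_def)
next
  fix z assume "z \<in> {s. 1 < Re s}"
  then have z: "1 < Re z" by simp
  have "RK a K z + uu a 0 powr (1-z) / (z-1) = RK a K' z + uu a 0 powr (1-z) / (z-1)"
    using sums_unique2[OF RK_sums[OF z, of a K] RK_sums[OF z, of a K']] .
  then show "RK a K z = RK a K' z" by simp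
qed

definition Rh :: "complex \<Rightarrow> complex \<Rightarrow> complex" where
  "Rh a s = RK a (nat \<lceil>- Re s\<rceil> + 1) s"

lemma Kpos: "- real (nat \<lceil>- Re s\<rceil> + 1) < Re s"
proof -
  have "- Re s \<le> real (nat \<lceil>- Re s\<rceil>)" by linarith
  then show ?thesis by simp
qed

lemma Rh_eq:
  assumes "- real K < Re s"
  shows "Rh a s = RK a K s"
  unfolding Rh_def by (rule RK_agree[OF Kpos assms])

lemma Rh_holo: "Rh a holomorphic_on UNIV"
  unfolding holomorphic_on_def
proof
  fix s0 :: complex
  define K where "K = nat \<lceil>- Re s0\<rceil> + 1"
  define S where "S = {s. - real K < Re s}"
  have oS: "open S" unfolding S_def by (rule open_halfspace_Re_gt)
  have s0: "s0 \<in> S" unfolding S_def K_def mem_Collect_eq by (rule Kpos)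
  have "RK a K holomorphic_on S" unfolding S_def by (rule RK_holo)
  moreover have "Rh a holomorphic_on S \<longleftrightarrow> RK a K holomorphic_on S"
    by (rule holomorphic_cong) (simp_all add: S_def Rh_eq)
  ultimately have "Rh a holomorphic_on S" by simp
  then have "Rh a field_differentiable (at s0)"
    by (rule holomorphic_on_imp_differentiable_at[OF _ oS s0])
  then show "Rh a field_differentiable (at s0 within UNIV)" by simp
qed

lemma Rh_sums:
  assumes "1 < Re s"
  shows "(\<lambda>m. (of_nat (Suc m) + a) powr (-s)) sums (Rh a s + uu a 0 powr (1-s) / (s-1))"
proof -
  have "Rh a s = RK a 0 s" by (rule Rh_eq) (use assms in simp)
  then show ?thesis using RK_sums[OF assms, of a 0] by simp
qed

lemma Zf_val: "Zf a (Suc k) (- of_nat k) = 0"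
proof -
  have "TT (Suc k) (- of_nat k) (uu a n) = 0" for n
  proof -
    have "norm (TT (Suc k) (- of_nat k) (uu a n)) \<le> CK (Suc k) * (norm (pochhammer (- of_nat k :: complex) (Suc k + 1)) * rr a n powr (-(Re (- of_nat k :: complex) + of_nat (Suc k) + 1)) * exp (\<bar>Im (- of_nat k :: complex)\<bar> * pi))"
      by (rule TT_bound) simp
    also have "pochhammer (- of_nat k :: complex) (Suc k + 1) = 0"
      by (rule pochhammer_of_nat_eq_0_lemma) simp
    finally show ?thesis by simp
  qed
  then show ?thesis by (simp add: Zf_def)
qed

lemma poch_neg:
  assumes "i \<le> k"
  shows "(-1)^i * pochhammer (- of_nat k :: complex) i = fact k / fact (k - i)"
  using assms
proof (induction i)
  case 0 then show ?case by simp
next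
  case (Suc i)
  then have ik: "i < k" by simp
  have f: "fact (k - i) = (of_nat (k - i) :: complex) * fact (k - Suc i)"
  proof -
    have e: "k - i = Suc (k - Suc i)" using ik by simp
    show ?thesis unfolding e fact_Suc by simp
  qed
  have "(-1)^Suc i * pochhammer (- of_nat k :: complex) (Suc i) = ((-1)^i * pochhammer (- of_nat k) i) * (of_nat k - of_nat i)"
    by (simp add: pochhammer_Suc algebra_simps)
  also have "\<dots> = fact k / fact (k - i) * of_nat (k - i)"
    using Suc ik by (simp add: of_nat_diff)
  also have "\<dots> = fact k / fact (k - Suc i)"
  proof -
    have nz: "(of_nat (k-i)::complex) \<noteq> 0" using ik by simp
    show ?thesis unfolding f using nz by (simp add: divide_simps)
  qed
  finally show ?case .
qed

lemma sum_tel: "(\<Sum>m<L. (of_nat (Suc m) + a)^k) = (Sp (Suc k) (a + of_nat L) - Sp (Suc k) a) / of_nat (Suc k)"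
proof (induction L)
  case 0 then show ?case by simp
next
  case (Suc L)
  have "Sp (Suc k) (a + of_nat L + 1) - Sp (Suc k) (a + of_nat L) = of_nat (Suc k) * (a + of_nat L + 1)^k"
    by (rule Sp_diff)
  then have "Sp (Suc k) (a + of_nat (Suc L)) = Sp (Suc k) (a + of_nat L) + of_nat (Suc k) * (of_nat (Suc L) + a)^k"
    by (simp add: algebra_simps)
  then show ?case using Suc.IH
    by (simp add: field_simps del: of_nat_Suc)
qed

lemma uu0_nz: "uu a 0 \<noteq> 0"
  using uu_Re_pos[of a 0] by auto

lemma seki0: "seki_bernoulli 0 = 1"
  by (simp add: seki_PB PB0)

lemma gf_negint:
  assumes j: "1 \<le> j" "j \<le> Suc k" and P: "P \<noteq> 0"
  shows "PB$j * gf (- of_nat k) j P = of_nat (Suc k choose j) * seki_bernoulli j * P^(Suc k - j) / of_nat (Suc k)"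
proof -
  have ex: "1 - (- of_nat k) - of_nat j = (of_nat (Suc k - j) :: complex)"
    using j by (simp add: of_nat_diff)
  have pw: "P powr (1 - (- of_nat k) - of_nat j) = P^(Suc k - j)"
    unfolding ex using P by (simp add: powr_nat')
  have kj: "k - (j - 1) = Suc k - j" using j by simp
  have pc: "(-1)^(j-1) * pochhammer (- of_nat k :: complex) (j-1) = fact k / fact (Suc k - j)"
    using poch_neg[of "j-1" k] j kj by simp
  have g: "gf (- of_nat k) j P = fact k / fact (Suc k - j) * P^(Suc k - j)"
    using j pw pc by (simp add: gf_def)
  have b: "(of_nat (Suc k choose j) :: complex) = fact (Suc k) / (fact j * fact (Suc k - j))"
    using j by (simp add: binomial_fact)
  have f1: "fact j \<noteq> (0::complex)" "fact (Suc k - j) \<noteq> (0::complex)" "(1 + of_nat k :: complex) \<noteq> 0"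
    by (simp, simp, metis of_nat_Suc of_nat_eq_0_iff nat.distinct(1))
  have fs: "(fact (Suc k) :: complex) = of_nat (Suc k) * fact k" by (rule fact_Suc)
  show ?thesis
    unfolding g b seki_PB fs using f1 by (simp add: field_simps del: of_nat_Suc)
qed

lemma Sp_split: "Sp (Suc k) P = P^(Suc k) + (\<Sum>j=1..Suc k. of_nat (Suc k choose j) * seki_bernoulli j * P^(Suc k - j))"
  unfolding Sp_def by (simp add: sum.atLeast_Suc_atMost seki0)

lemma Rh_val:
  assumes nz: "\<And>m. of_nat (Suc m) + a \<noteq> 0"
  shows "Rh a (- of_nat k) = uu a 0 ^ Suc k / of_nat (Suc k) - Sp (Suc k) a / of_nat (Suc k)"
proof -
  define P where "P = uu a 0"
  have P0: "P \<noteq> 0" unfolding P_def by (rule uu0_nz)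
  have "Rh a (- of_nat k) = RK a (Suc k) (- of_nat k)" by (rule Rh_eq) simp
  also have "\<dots> = (\<Sum>m<N0 a. (of_nat (Suc m) + a)^k) - (\<Sum>j=1..Suc k. PB$j * gf (- of_nat k) j P)"
  proof -
    have "(\<Sum>m<N0 a. (of_nat (Suc m) + a) powr (- (- of_nat k))) = (\<Sum>m<N0 a. (of_nat (Suc m) + a)^k)"
      by (intro sum.cong refl) (use nz in \<open>simp add: powr_nat'\<close>)
    then show ?thesis by (simp add: RK_def Zf_val P_def)
  qed
  also have "(\<Sum>j=1..Suc k. PB$j * gf (- of_nat k) j P) = (\<Sum>j=1..Suc k. of_nat (Suc k choose j) * seki_bernoulli j * P^(Suc k - j) / of_nat (Suc k))"
    by (intro sum.cong refl gf_negint P0) auto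
  also have "\<dots> = (Sp (Suc k) P - P^(Suc k)) / of_nat (Suc k)"
    by (simp only: Sp_split sum_divide_distrib add_diff_cancel_left')
  also have "(\<Sum>m<N0 a. (of_nat (Suc m) + a)^k) = (Sp (Suc k) P - Sp (Suc k) a) / of_nat (Suc k)"
    unfolding sum_tel P_def uu_def by (simp add: add.commute)
  finally show ?thesis unfolding P_def by (simp add: diff_divide_distrib algebra_simps)
qed

lemma hurwitz:
  assumes nz: "\<And>m. of_nat (Suc m) + a \<noteq> 0"
  shows "\<exists>R P. R holomorphic_on UNIV \<and> P \<noteq> 0 \<and>
    (\<forall>s. 1 < Re s \<longrightarrow> ((\<lambda>m. (of_nat (Suc m) + a) powr (-s)) has_sum (R s + P powr (1-s) / (s-1))) UNIV) \<and>
    (\<forall>k. R (- of_nat k) = P ^ Suc k / of_nat (Suc k) - Sp (Suc k) a / of_nat (Suc k))"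
proof (intro exI conjI allI impI)
  show "Rh a holomorphic_on UNIV" by (rule Rh_holo)
  show "uu a 0 \<noteq> 0" by (rule uu0_nz)
  fix s :: complex assume s: "1 < Re s"
  show "((\<lambda>m. (of_nat (Suc m) + a) powr (-s)) has_sum (Rh a s + uu a 0 powr (1-s) / (s-1))) UNIV"
    by (rule norm_summable_imp_has_sum[OF abs_summable[OF s] Rh_sums[OF s]])
next
  fix k show "Rh a (- of_nat k) = uu a 0 ^ Suc k / of_nat (Suc k) - Sp (Suc k) a / of_nat (Suc k)"
    by (rule Rh_val[OF nz])
qed

lemma neg_one_pow_split:
  assumes "j \<le> n"
  shows "(-1::complex)^j = (-1)^n * (-1)^(n-j)"
proof -
  have "n + (n - j) = j + 2*(n-j)" using assms by simp
  then have "(-1::complex)^n * (-1)^(n-j) = (-1)^(j + 2*(n-j))" by (metis power_add)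
  also have "\<dots> = (-1)^j" by (simp add: power_add power_mult)
  finally show ?thesis by simp
qed

lemma rhs_eq:
  "(\<Sum>j=0..k+1. of_nat ((k+1) choose j) * seki_bernoulli j * ((-1)^j * b^(k+1-j) - a^(k+1-j)))
   = (-1)^(Suc k) * Sp (Suc k) (-b) - Sp (Suc k) a"
proof -
  have "(-1)^(Suc k) * Sp (Suc k) (-b) = (\<Sum>j=0..Suc k. of_nat (Suc k choose j) * seki_bernoulli j * ((-1)^j * b^(Suc k-j)))"
    unfolding Sp_def sum_distrib_left
  proof (intro sum.cong refl)
    fix j assume "j \<in> {0..Suc k}"
    then have j: "j \<le> Suc k" by simp
    have p: "(-b)^(Suc k - j) = (-1)^(Suc k - j) * b^(Suc k - j)" by (rule power_minus)
    have "(-1::complex)^(Suc k) * (-b)^(Suc k - j) = ((-1)^(Suc k) * (-1)^(Suc k - j)) * b^(Suc k - j)"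
      unfolding p by (simp only: mult.assoc)
    also have "\<dots> = (-1)^j * b^(Suc k - j)"
      using neg_one_pow_split[OF j] by simp
    finally have "(-1::complex)^(Suc k) * (-b)^(Suc k - j) = (-1)^j * b^(Suc k - j)" .
    then show "(-1)^(Suc k) * (of_nat (Suc k choose j) * seki_bernoulli j * (-b)^(Suc k - j))
      = of_nat (Suc k choose j) * seki_bernoulli j * ((-1)^j * b^(Suc k-j))"
      by (simp only: mult_ac)
  qed
  then show ?thesis
    by (simp add: Sp_def sum_subtractf right_diff_distrib)
qed

lemma fin_formula:
  assumes "b = a + of_nat L + 1"
  shows "(\<Sum>m<L. (of_nat (Suc m) + a)^k) =
    1 / of_nat (k + 1) * (\<Sum>j=0..k+1. of_nat ((k+1) choose j) * seki_bernoulli j * ((-1)^j * b^(k+1-j) - a^(k+1-j)))"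
proof -
  have "a + of_nat L = b - 1" using assms by simp
  then have X: "(\<Sum>m<L. (of_nat (Suc m) + a)^k) = ((-1)^(Suc k) * Sp (Suc k) (-b) - Sp (Suc k) a) / of_nat (Suc k)"
    by (simp add: sum_tel Sp_refl del: of_nat_Suc)
  have c: "(of_nat (k + 1) :: complex) = of_nat (Suc k)" by simp
  show ?thesis unfolding rhs_eq c X by simp
qed

lemma exp_negint: "exp (complex_of_real pi * \<i> * - of_nat k) = (-1)^k"
proof -
  have e1: "complex_of_real pi * \<i> * - of_nat k = - (of_nat k * (complex_of_real pi * \<i>))" by simp
  have e2: "exp (of_nat k * (complex_of_real pi * \<i>)) = (-1)^k"
    by (simp only: exp_of_nat_mult exp_pi_i)
  show ?thesis unfolding e1 exp_minus e2 by (simp add: power_inverse[symmetric])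
qed

lemma idx_pow_holo: "(\<lambda>s. idx_pow tp tm c s) holomorphic_on UNIV"
  by (cases c) (auto intro!: holomorphic_intros)

lemma idx_pow_Pos: "of_nat i + tp \<noteq> 0 \<Longrightarrow> idx_pow tp tm (Pos i) (- of_nat k) = idx_val tp tm (Pos i) ^ k"
  by (simp add: powr_nat')

lemma idx_pow_Neg:
  assumes "of_nat i - tm \<noteq> 0"
  shows "idx_pow tp tm (Neg i) (- of_nat k) = idx_val tp tm (Neg i) ^ k"
proof -
  have "idx_pow tp tm (Neg i) (- of_nat k) = (-1)^k * (of_nat i - tm)^k"
    using assms exp_negint[of k] by (simp add: powr_nat')
  also have "\<dots> = (- (of_nat i - tm))^k" by (rule power_minus[symmetric])
  finally show ?thesis by simp
qed

lemma tp_nz: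
  assumes tp: "tp \<notin> complex_of_real ` {..-1}"
  shows "of_nat (Suc i) + tp \<noteq> 0"
proof
  assume h: "of_nat (Suc i) + tp = 0"
  have "tp = (of_nat (Suc i) + tp) - of_nat (Suc i)" by simp
  also have "\<dots> = complex_of_real (- real (Suc i))" unfolding h by simp
  finally have "tp = complex_of_real (- real (Suc i))" .
  moreover have "- real (Suc i) \<in> {..-1}" by simp
  ultimately show False using tp by blast
qed

lemma tm_nz:
  assumes tm: "tm \<notin> complex_of_real ` {1..}"
  shows "of_nat (Suc i) - tm \<noteq> 0"
proof
  assume "of_nat (Suc i) - tm = 0"
  then have "tm = complex_of_real (real (Suc i))" by simp
  moreover have "real (Suc i) \<in> {1..}" by simp
  ultimately show False using tm by blast
qed

lemma finite_case:
  assumes fin: "finite (idx_between a b)"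
    and vals: "\<And>c k. c \<in> idx_between a b \<Longrightarrow> idx_pow tp tm c (- of_nat k) = idx_val tp tm c ^ k"
    and sums: "\<And>k. (\<Sum>c\<in>idx_between a b. idx_val tp tm c ^ k) =
              1 / of_nat (k + 1) *
              (\<Sum>j = 0..k + 1. of_nat ((k + 1) choose j) * seki_bernoulli j *
                 ((-1) ^ j * idx_val tp tm b ^ (k + 1 - j) - idx_val tp tm a ^ (k + 1 - j)))"
  shows "\<exists>F. F holomorphic_on UNIV \<and>
           (\<forall>s. 1 < Re s \<longrightarrow> ((\<lambda>c. idx_pow tp tm c s) has_sum F s) (idx_between a b)) \<and>
           (\<forall>k::nat. F (- of_nat k) =
              1 / of_nat (k + 1) *
              (\<Sum>j = 0..k + 1. of_nat ((k + 1) choose j) * seki_bernoulli j *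
                 ((-1) ^ j * idx_val tp tm b ^ (k + 1 - j) - idx_val tp tm a ^ (k + 1 - j))))"
proof (intro exI[of _ "\<lambda>s. \<Sum>c\<in>idx_between a b. idx_pow tp tm c s"] conjI allI impI)
  show "(\<lambda>s. \<Sum>c\<in>idx_between a b. idx_pow tp tm c s) holomorphic_on UNIV"
    by (intro holomorphic_on_sum idx_pow_holo)
  fix s :: complex
  show "((\<lambda>c. idx_pow tp tm c s) has_sum (\<Sum>c\<in>idx_between a b. idx_pow tp tm c s)) (idx_between a b)"
    using fin by simp
next
  fix k :: nat
  have "(\<Sum>c\<in>idx_between a b. idx_pow tp tm c (- of_nat k)) = (\<Sum>c\<in>idx_between a b. idx_val tp tm c ^ k)"
    by (intro sum.cong refl vals)
  then show "(\<Sum>c\<in>idx_between a b. idx_pow tp tm c (- of_nat k)) =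
              1 / of_nat (k + 1) *
              (\<Sum>j = 0..k + 1. of_nat ((k + 1) choose j) * seki_bernoulli j *
                 ((-1) ^ j * idx_val tp tm b ^ (k + 1 - j) - idx_val tp tm a ^ (k + 1 - j)))"
    using sums by simp
qed

lemma between_PP:
  assumes "n < n'"
  shows "idx_between (Pos n) (Pos n') = (\<lambda>m. Pos (n + Suc m)) ` {..<n' - Suc n}"
proof (intro set_eqI iffI)
  fix c assume "c \<in> idx_between (Pos n) (Pos n')"
  then obtain i where c: "c = Pos i" "n < i" "i < n'"
    by (cases c) (auto simp: idx_between_def)
  then have "i = n + Suc (i - Suc n)" "i - Suc n \<in> {..<n' - Suc n}" by auto
  then show "c \<in> (\<lambda>m. Pos (n + Suc m)) ` {..<n' - Suc n}" using c by blast
next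
  fix c assume "c \<in> (\<lambda>m. Pos (n + Suc m)) ` {..<n' - Suc n}"
  then show "c \<in> idx_between (Pos n) (Pos n')" by (auto simp: idx_between_def)
qed

lemma between_NN:
  assumes "n' < n"
  shows "idx_between (Neg n) (Neg n') = (\<lambda>m. Neg (n - Suc m)) ` {..<n - Suc n'}"
proof (intro set_eqI iffI)
  fix c assume "c \<in> idx_between (Neg n) (Neg n')"
  then obtain i where c: "c = Neg i" "n' < i" "i < n"
    by (cases c) (auto simp: idx_between_def)
  then have "i = n - Suc (n - Suc i)" "n - Suc i \<in> {..<n - Suc n'}" by auto
  then show "c \<in> (\<lambda>m. Neg (n - Suc m)) ` {..<n - Suc n'}" using c by blast
next
  fix c assume "c \<in> (\<lambda>m. Neg (n - Suc m)) ` {..<n - Suc n'}"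
  then show "c \<in> idx_between (Neg n) (Neg n')" by (auto simp: idx_between_def)
qed

lemma inj_NN: "inj_on (\<lambda>m. Neg (n - Suc m)) {..<n - Suc n'}"
  by (auto simp: inj_on_def)

lemma between_PN:
  "idx_between (Pos n) (Neg m) = range (\<lambda>j. Pos (n + Suc j)) \<union> range (\<lambda>j. Neg (m + Suc j))"
proof (intro set_eqI iffI)
  fix c assume c: "c \<in> idx_between (Pos n) (Neg m)"
  show "c \<in> range (\<lambda>j. Pos (n + Suc j)) \<union> range (\<lambda>j. Neg (m + Suc j))"
  proof (cases c)
    case (Pos i)
    with c have "n < i" by (simp add: idx_between_def)
    then have "i = n + Suc (i - Suc n)" by simp
    then show ?thesis using Pos by blast
  next
    case (Neg i)
    with c have "m < i" by (simp add: idx_between_def)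
    then have "i = m + Suc (i - Suc m)" by simp
    then show ?thesis using Neg by blast
  qed
next
  fix c assume "c \<in> range (\<lambda>j. Pos (n + Suc j)) \<union> range (\<lambda>j. Neg (m + Suc j))"
  then show "c \<in> idx_between (Pos n) (Neg m)" by (auto simp: idx_between_def)
qed

lemma alg:
  fixes D X1 X2 S1 S2 e :: complex
  assumes "D \<noteq> 0"
  shows "(X1 / D - S1 / D) + e * (X2 / D - S2 / D) + (X1 + e * X2) / (- D) = (- e * S2 - S1) / D"
  using assms by (simp add: field_simps)

lemma mixed_case:
  assumes tp: "tp \<notin> complex_of_real ` {..-1}"
    and tm: "tm \<notin> complex_of_real ` {1..}"
  shows "\<exists>F. F holomorphic_on UNIV \<and>
           (\<forall>s. 1 < Re s \<longrightarrow> ((\<lambda>c. idx_pow tp tm c s) has_sum F s) (idx_between (Pos n) (Neg m))) \<and>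
           (\<forall>k::nat. F (- of_nat k) =
              1 / of_nat (k + 1) *
              (\<Sum>j = 0..k + 1. of_nat ((k + 1) choose j) * seki_bernoulli j *
                 ((-1) ^ j * idx_val tp tm (Neg m) ^ (k + 1 - j) - idx_val tp tm (Pos n) ^ (k + 1 - j))))"
proof -
  define a1 where "a1 = of_nat n + tp"
  define a2 where "a2 = of_nat m - tm"
  have nz1: "of_nat (Suc j) + a1 \<noteq> 0" for j
    using tp_nz[OF tp, of "n + j"] by (simp add: a1_def algebra_simps)
  have nz2: "of_nat (Suc j) + a2 \<noteq> 0" for j
    using tm_nz[OF tm, of "m + j"] by (simp add: a2_def algebra_simps)
  obtain R1 P1 where R1: "R1 holomorphic_on UNIV" "P1 \<noteq> 0"
    "\<And>s. 1 < Re s \<Longrightarrow> ((\<lambda>j. (of_nat (Suc j) + a1) powr (-s)) has_sum (R1 s + P1 powr (1-s) / (s-1))) UNIV"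
    "\<And>k. R1 (- of_nat k) = P1 ^ Suc k / of_nat (Suc k) - Sp (Suc k) a1 / of_nat (Suc k)"
    using hurwitz[OF nz1] by blast
  obtain R2 P2 where R2: "R2 holomorphic_on UNIV" "P2 \<noteq> 0"
    "\<And>s. 1 < Re s \<Longrightarrow> ((\<lambda>j. (of_nat (Suc j) + a2) powr (-s)) has_sum (R2 s + P2 powr (1-s) / (s-1))) UNIV"
    "\<And>k. R2 (- of_nat k) = P2 ^ Suc k / of_nat (Suc k) - Sp (Suc k) a2 / of_nat (Suc k)"
    using hurwitz[OF nz2] by blast
  define E where "E s = exp (complex_of_real pi * \<i> * s)" for s
  define h where "h s = P1 powr (1-s) + E s * P2 powr (1-s)" for s
  have hh: "h holomorphic_on UNIV" unfolding h_def E_def by (intro holomorphic_intros)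
  have h1: "h 1 = 0" using R1(2) R2(2) by (simp add: h_def E_def)
  define \<phi> where "\<phi> z = (if z = 1 then deriv h 1 else (h z - h 1) / (z - 1))" for z
  have \<phi>h: "\<phi> holomorphic_on UNIV"
    unfolding \<phi>_def[abs_def] by (rule pole_lemma[OF hh]) simp
  define F where "F s = R1 s + E s * R2 s + \<phi> s" for s
  show ?thesis
  proof (intro exI[of _ F] conjI allI impI)
    show "F holomorphic_on UNIV"
      unfolding F_def[abs_def] E_def by (intro holomorphic_intros R1(1) R2(1) \<phi>h)
  next
    fix s :: complex assume s: "1 < Re s"
    have s1: "s \<noteq> 1" using s by auto
    have injA: "inj_on (\<lambda>j. Pos (n + Suc j)) UNIV" by (auto simp: inj_on_def)
    have injB: "inj_on (\<lambda>j. Neg (m + Suc j)) UNIV" by (auto simp: inj_on_def)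
    have hA: "((\<lambda>c. idx_pow tp tm c s) has_sum (R1 s + P1 powr (1-s) / (s-1))) (range (\<lambda>j. Pos (n + Suc j)))"
    proof -
      have e: "((\<lambda>c. idx_pow tp tm c s) \<circ> (\<lambda>j. Pos (n + Suc j))) = (\<lambda>j. (of_nat (Suc j) + a1) powr (-s))"
        by (auto simp: a1_def algebra_simps)
      show ?thesis unfolding has_sum_reindex[OF injA] e by (rule R1(3)[OF s])
    qed
    have hB: "((\<lambda>c. idx_pow tp tm c s) has_sum (E s * (R2 s + P2 powr (1-s) / (s-1)))) (range (\<lambda>j. Neg (m + Suc j)))"
    proof -
      have e: "((\<lambda>c. idx_pow tp tm c s) \<circ> (\<lambda>j. Neg (m + Suc j))) = (\<lambda>j. E s * (of_nat (Suc j) + a2) powr (-s))"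
        by (auto simp: a2_def E_def algebra_simps)
      show ?thesis unfolding has_sum_reindex[OF injB] e by (rule has_sum_cmult_right[OF R2(3)[OF s]])
    qed
    have "((\<lambda>c. idx_pow tp tm c s) has_sum (R1 s + P1 powr (1-s) / (s-1) + E s * (R2 s + P2 powr (1-s) / (s-1))))
           (range (\<lambda>j. Pos (n + Suc j)) \<union> range (\<lambda>j. Neg (m + Suc j)))"
      by (rule has_sum_Un_disjoint[OF hA hB]) auto
    moreover have "R1 s + P1 powr (1-s) / (s-1) + E s * (R2 s + P2 powr (1-s) / (s-1)) = F s"
    proof -
      have "\<phi> s = h s / (s - 1)" using s1 by (simp add: \<phi>_def h1)
      then show ?thesis by (simp add: F_def h_def add_divide_distrib ring_distribs)
    qed
    ultimately show "((\<lambda>c. idx_pow tp tm c s) has_sum F s) (idx_between (Pos n) (Neg m))"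
      by (simp add: between_PN)
  next
    fix k :: nat
    have Ek: "E (- of_nat k) = (-1)^k" unfolding E_def by (rule exp_negint)
    have ex: "1 - (- of_nat k) = (of_nat (Suc k) :: complex)" by simp
    have hk: "h (- of_nat k) = P1 ^ Suc k + (-1)^k * P2 ^ Suc k"
    proof -
      have pw: "P powr (1 + of_nat k) = P ^ Suc k" if "P \<noteq> 0" for P :: complex
      proof -
        have "P powr (1 + of_nat k) = P powr of_nat (Suc k)" by simp
        also have "\<dots> = P ^ Suc k" using that by (rule powr_nat'[OF disjI1])
        finally show ?thesis .
      qed
      show ?thesis using R1(2) R2(2) by (simp add: h_def Ek pw)
    qed
    have nk: "(- of_nat k :: complex) \<noteq> 1"
    proof
      assume "(- of_nat k :: complex) = 1"
      then have "Re (- of_nat k :: complex) = 1" by simp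
      then show False by simp
    qed
    have c: "(- of_nat k - 1 :: complex) = - of_nat (Suc k)" by simp
    have "F (- of_nat k) = R1 (- of_nat k) + (-1)^k * R2 (- of_nat k) + h (- of_nat k) / (- of_nat k - 1)"
      using nk by (simp add: F_def \<phi>_def Ek h1)
    also have "\<dots> = (P1 ^ Suc k / of_nat (Suc k) - Sp (Suc k) a1 / of_nat (Suc k))
        + (-1)^k * (P2 ^ Suc k / of_nat (Suc k) - Sp (Suc k) a2 / of_nat (Suc k))
        + (P1 ^ Suc k + (-1)^k * P2 ^ Suc k) / (- of_nat (Suc k))"
      by (simp only: R1(4) R2(4) hk c)
    also have "\<dots> = (- ((-1)^k) * Sp (Suc k) a2 - Sp (Suc k) a1) / of_nat (Suc k)"
      by (rule alg) (metis of_nat_eq_0_iff nat.distinct(1))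
    also have "\<dots> = ((-1)^(Suc k) * Sp (Suc k) a2 - Sp (Suc k) a1) / of_nat (Suc k)"
      by simp
    also have "\<dots> = 1 / of_nat (k + 1) *
              (\<Sum>j = 0..k + 1. of_nat ((k + 1) choose j) * seki_bernoulli j *
                 ((-1) ^ j * idx_val tp tm (Neg m) ^ (k + 1 - j) - idx_val tp tm (Pos n) ^ (k + 1 - j)))"
    proof -
      have "a2 = - idx_val tp tm (Neg m)" "a1 = idx_val tp tm (Pos n)" by (simp_all add: a1_def a2_def)
      then show ?thesis unfolding rhs_eq by simp
    qed
    finally show "F (- of_nat k) =
              1 / of_nat (k + 1) *
              (\<Sum>j = 0..k + 1. of_nat ((k + 1) choose j) * seki_bernoulli j *
                 ((-1) ^ j * idx_val tp tm (Neg m) ^ (k + 1 - j) - idx_val tp tm (Pos n) ^ (k + 1 - j)))" .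
  qed
qed

theorem lemma3p3:
  fixes tp tm :: complex and a b :: idx
  assumes tp: "tp \<notin> complex_of_real ` {..-1}"
    and tm: "tm \<notin> complex_of_real ` {1..}"
    and ab: "idx_less a b"
  shows "\<exists>F. F holomorphic_on UNIV \<and>
           (\<forall>s. 1 < Re s \<longrightarrow> ((\<lambda>c. idx_pow tp tm c s) has_sum F s) (idx_between a b)) \<and>
           (\<forall>k::nat. F (- of_nat k) =
              1 / of_nat (k + 1) *
              (\<Sum>j = 0..k + 1. of_nat ((k + 1) choose j) * seki_bernoulli j *
                 ((-1) ^ j * idx_val tp tm b ^ (k + 1 - j) - idx_val tp tm a ^ (k + 1 - j))))"
proof (cases a)
  case (Pos n)
  show ?thesis
  proof (cases b)
    case (Pos n')
    with \<open>a = Pos n\<close> ab have nn: "n < n'" by simp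
    note btw = between_PP[OF nn]
    have inj: "inj_on (\<lambda>m. Pos (n + Suc m)) {..<n' - Suc n}" by (auto simp: inj_on_def)
    show ?thesis unfolding \<open>a = Pos n\<close> \<open>b = Pos n'\<close>
    proof (rule finite_case)
      show "finite (idx_between (Pos n) (Pos n'))" unfolding btw by simp
    next
      fix c k assume "c \<in> idx_between (Pos n) (Pos n')"
      then obtain m where c: "c = Pos (n + Suc m)" unfolding btw by blast
      have "of_nat (Suc (n + m)) + tp \<noteq> 0" by (rule tp_nz[OF tp])
      then show "idx_pow tp tm c (- of_nat k) = idx_val tp tm c ^ k"
        unfolding c by (intro idx_pow_Pos) simp
    next
      fix k
      have "(\<Sum>c\<in>idx_between (Pos n) (Pos n'). idx_val tp tm c ^ k)
          = (\<Sum>m<n' - Suc n. (of_nat (Suc m) + (of_nat n + tp))^k)"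
        unfolding btw sum.reindex[OF inj] by (intro sum.cong refl) (simp add: algebra_simps)
      also have "\<dots> = 1 / of_nat (k + 1) *
              (\<Sum>j = 0..k + 1. of_nat ((k + 1) choose j) * seki_bernoulli j *
                 ((-1) ^ j * (of_nat n' + tp) ^ (k + 1 - j) - (of_nat n + tp) ^ (k + 1 - j)))"
        by (rule fin_formula) (use nn in \<open>simp add: of_nat_diff\<close>)
      finally show "(\<Sum>c\<in>idx_between (Pos n) (Pos n'). idx_val tp tm c ^ k) =
              1 / of_nat (k + 1) *
              (\<Sum>j = 0..k + 1. of_nat ((k + 1) choose j) * seki_bernoulli j *
                 ((-1) ^ j * idx_val tp tm (Pos n') ^ (k + 1 - j) - idx_val tp tm (Pos n) ^ (k + 1 - j)))"
        by simp
    qed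
  next
    case (Neg m)
    show ?thesis unfolding \<open>a = Pos n\<close> \<open>b = Neg m\<close> by (rule mixed_case[OF tp tm])
  qed
next
  case (Neg n)
  show ?thesis
  proof (cases b)
    case (Pos n')
    with \<open>a = Neg n\<close> ab show ?thesis by simp
  next
    case (Neg n')
    with \<open>a = Neg n\<close> ab have nn: "n' < n" by simp
    note btw = between_NN[OF nn]
    show ?thesis unfolding \<open>a = Neg n\<close> \<open>b = Neg n'\<close>
    proof (rule finite_case)
      show "finite (idx_between (Neg n) (Neg n'))" unfolding btw by simp
    next
      fix c k assume "c \<in> idx_between (Neg n) (Neg n')"
      then obtain i where c: "c = Neg i" "n' < i" by (cases c) (auto simp: idx_between_def)
      then have "i = Suc (i - 1)" by simp
      then have "of_nat i - tm \<noteq> 0" using tm_nz[OF tm, of "i - 1"] by simp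
      then show "idx_pow tp tm c (- of_nat k) = idx_val tp tm c ^ k"
        unfolding c by (rule idx_pow_Neg)
    next
      fix k
      have "(\<Sum>c\<in>idx_between (Neg n) (Neg n'). idx_val tp tm c ^ k)
          = (\<Sum>m<n - Suc n'. (of_nat (Suc m) + (- of_nat n + tm))^k)"
        unfolding btw sum.reindex[OF inj_NN]
      proof (intro sum.cong refl)
        fix m assume "m \<in> {..<n - Suc n'}"
        then have "Suc m \<le> n" by simp
        then show "((\<lambda>c. idx_val tp tm c ^ k) \<circ> (\<lambda>m. Neg (n - Suc m))) m = (of_nat (Suc m) + (- of_nat n + tm))^k"
          by (simp add: of_nat_diff algebra_simps)
      qed
      also have "\<dots> = 1 / of_nat (k + 1) *
              (\<Sum>j = 0..k + 1. of_nat ((k + 1) choose j) * seki_bernoulli j *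
                 ((-1) ^ j * (- of_nat n' + tm) ^ (k + 1 - j) - (- of_nat n + tm) ^ (k + 1 - j)))"
        by (rule fin_formula) (use nn in \<open>simp add: of_nat_diff\<close>)
      finally show "(\<Sum>c\<in>idx_between (Neg n) (Neg n'). idx_val tp tm c ^ k) =
              1 / of_nat (k + 1) *
              (\<Sum>j = 0..k + 1. of_nat ((k + 1) choose j) * seki_bernoulli j *
                 ((-1) ^ j * idx_val tp tm (Neg n') ^ (k + 1 - j) - idx_val tp tm (Neg n) ^ (k + 1 - j)))"
        by simp
    qed
  qed
qed


end
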